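(* Let $m,n\ge 1$, $k=\min(m,n)$, and let $M^\star\in\mathbb{R}^{m\times n}$ have singular value decomposition $M^\star=P\Sigma Q^\top$ with $P\in\mathbb{R}^{m\times k}$, $Q\in\mathbb{R}^{n\times k}$ having orthonormal columns $p_i,q_i$ and $\Sigma=\mathrm{diag}(\sigma_1,\dots,\sigma_k)$ with $\sigma_1>\sigma_2>\cdots>\sigma_k>0$. For $r\in\{1,\dots,k\}$ let $A_r=\sum_{i=1}^r\sigma_i p_iq_i^\top$. For $U\in\mathbb{R}^{m\times k}$, $V\in\mathbb{R}^{n\times k}$ define $$\mathcal{E}(U,V,r)=\min_{S_r\subseteq\{1,\dots,k\},\,|S_r|=r}\bigl\|U\Pi_{S_r}V^\top-A_r\bigr\|_F^2,$$ where $\Pi_{S}$ is the $k\times k$ diagonal matrix with $(\Pi_S)_{ii}=1$ if $i\in S$ and $0$ otherwise. Let $\mathcal{M}=\{(U,V)\in\mathbb{R}^{m\times k}\times\mathbb{R}^{n\times k}: UV^\top=M^\star\}$ be the set of global minimizers of $\mathcal{L}_{PTS}(U,V)=\|UV^\top-M^\star\|_F^2$. Then for each $r<k$, the set $\mathcal{M}_r=\{(U,V)\in\mathcal{M}:\mathcal{E}(U,V,r)=0\}$ has Lebesgue measure zero relative to $\mathcal{M}$.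
   Context: $\|\cdot\|_F$ denotes the Frobenius norm. $A_r$ is the (unique) best rank-$r$ approximation of $M^\star$ (truncated SVD). *)

theory Defs
  imports "HOL-Analysis.Analysis"
begin

text \<open>Real matrices are rendered as real^'c^'r (rows indexed by 'r, columns by 'c).\<close>

definition frob_norm :: "real^'c^'r \<Rightarrow> real" where
  "frob_norm A = sqrt (\<Sum>i\<in>UNIV. \<Sum>j\<in>UNIV. (A $ i $ j)^2)"

definition diag_mat :: "('k \<Rightarrow> real) \<Rightarrow> real^'k^'k" where
  "diag_mat d = (\<chi> i j. if i = j then d i else 0)"

definition sel_mat :: "'k set \<Rightarrow> real^'k^'k" where
  "sel_mat S = diag_mat (\<lambda>i. if i \<in> S then 1 else 0)"

definition has_orthonormal_columns :: "real^'k^'m \<Rightarrow> bool" where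
  "has_orthonormal_columns P \<longleftrightarrow> transpose P ** P = mat 1"

definition col_outer :: "real^'k^'m \<Rightarrow> real^'k^'n \<Rightarrow> 'k \<Rightarrow> real^'n^'m" where
  "col_outer P Q i = (\<chi> a b. P $ a $ i * Q $ b $ i)"

text \<open>Indices of the r largest singular values (the singular values are pairwise
  distinct, so with sigma_1 > ... > sigma_k these are exactly the indices 1..r).\<close>
definition top_indices :: "('k::finite \<Rightarrow> real) \<Rightarrow> nat \<Rightarrow> 'k set" where
  "top_indices \<sigma> r = {i. card {j. \<sigma> i < \<sigma> j} < r}"

definition trunc_svd :: "real^'k^'m \<Rightarrow> ('k::finite \<Rightarrow> real) \<Rightarrow> real^'k^'n \<Rightarrow> nat \<Rightarrow> real^'n^'m" where
  "trunc_svd P \<sigma> Q r = (\<Sum>i\<in>top_indices \<sigma> r. \<sigma> i *\<^sub>R col_outer P Q i)"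

definition err_E :: "real^'k^'m \<Rightarrow> real^'k^'n \<Rightarrow> real^'n^'m \<Rightarrow> nat \<Rightarrow> real" where
  "err_E U V Ar r = Min {(frob_norm (U ** sel_mat S ** transpose V - Ar))^2 | S. card S = r}"

definition minimizers :: "real^'n^'m \<Rightarrow> ((real^'k^'m) \<times> (real^'k^'n)) set" where
  "minimizers Mstar = {(U,V). U ** transpose V = Mstar}"

text \<open>Measure relative to M: M is the smooth k^2-dimensional manifold parametrised
  (diffeomorphically) by GL_k via G |-> (P Sigma G, Q G^{-T}).\<close>
definition chart :: "real^'k^'m \<Rightarrow> ('k \<Rightarrow> real) \<Rightarrow> real^'k^'n \<Rightarrow> real^'k^'k
    \<Rightarrow> (real^'k^'m) \<times> (real^'k^'n)" where
  "chart P \<sigma> Q G = (P ** diag_mat \<sigma> ** G, Q ** transpose (matrix_inv G))"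

definition rel_null :: "real^'k^'m \<Rightarrow> ('k \<Rightarrow> real) \<Rightarrow> real^'k^'n
    \<Rightarrow> ((real^'k^'m) \<times> (real^'k^'n)) set \<Rightarrow> bool" where
  "rel_null P \<sigma> Q X \<longleftrightarrow> {G. invertible G \<and> chart P \<sigma> Q G \<in> X} \<in> null_sets lborel"

end

theory Submission
  imports Defs
begin

lemma diag_left: "(diag_mat d ** (A::real^'n^'k)) $ i $ j = d i * A $ i $ j"
  unfolding matrix_matrix_mult_def diag_mat_def
  by (simp add: if_distrib[of "\<lambda>x. x * _"] sum.delta cong: if_cong)

lemma diag_right: "((A::real^'k^'n) ** diag_mat d) $ i $ j = A $ i $ j * d j"
  unfolding matrix_matrix_mult_def diag_mat_def
  by (simp add: if_distrib[of "\<lambda>x. _ * x"] sum.delta' cong: if_cong)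

lemma diag_inv: "(\<forall>i. d i \<noteq> 0) \<Longrightarrow> diag_mat (\<lambda>i. inverse (d i)) ** diag_mat d = (mat 1 :: real^'k^'k)"
  by (simp add: vec_eq_iff diag_left, simp add: mat_def diag_mat_def)

lemma diag_sel: "diag_mat \<sigma> ** sel_mat T = diag_mat (\<lambda>i. if i \<in> T then \<sigma> i else 0)"
  by (simp add: vec_eq_iff diag_left, simp add: sel_mat_def diag_mat_def)

lemma mul_tr: "((X::real^'k^'m) ** transpose (Q::real^'k^'n)) $ a $ b = (\<Sum>c\<in>UNIV. X $ a $ c * Q $ b $ c)"
  by (simp add: matrix_matrix_mult_def transpose_def)

lemma trunc_eq: "trunc_svd P \<sigma> Q r = P ** (diag_mat \<sigma> ** sel_mat (top_indices \<sigma> r)) ** transpose Q"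
proof -
  let ?T = "top_indices \<sigma> r"
  show ?thesis
  proof (simp add: vec_eq_iff, intro allI)
    fix a b
    have "trunc_svd P \<sigma> Q r $ a $ b = (\<Sum>i\<in>?T. \<sigma> i * (P $ a $ i * Q $ b $ i))"
      unfolding trunc_svd_def col_outer_def by (simp add: sum_component)
    also have "\<dots> = (\<Sum>c\<in>UNIV. (P $ a $ c * (if c \<in> ?T then \<sigma> c else 0)) * Q $ b $ c)"
      by (simp add: if_distrib[of "\<lambda>x. _ * x"] if_distrib[of "\<lambda>x. x * _"] sum.If_cases algebra_simps)
    also have "\<dots> = (P ** (diag_mat \<sigma> ** sel_mat ?T) ** transpose Q) $ a $ b"
      unfolding diag_sel
      by (simp only: mul_tr diag_right)
    finally show "trunc_svd P \<sigma> Q r $ a $ b = (P ** (diag_mat \<sigma> ** sel_mat ?T) ** transpose Q) $ a $ b" .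
  qed
qed

lemma frob0: "frob_norm X = 0 \<Longrightarrow> X = 0"
proof -
  assume "frob_norm X = 0"
  hence s: "(\<Sum>i\<in>UNIV. \<Sum>j\<in>UNIV. (X $ i $ j)^2) = 0" unfolding frob_norm_def by simp
  have "\<forall>i\<in>UNIV. (\<Sum>j\<in>UNIV. (X $ i $ j)^2) = 0"
    using s by (subst (asm) sum_nonneg_eq_0_iff) (auto intro: sum_nonneg)
  hence "\<forall>i j. (X $ i $ j)^2 = 0"
    by (simp add: sum_nonneg_eq_0_iff)
  thus "X = 0" by (simp add: vec_eq_iff)
qed

lemma err_zero:
  fixes U :: "real^'k^'m" and V :: "real^'k^'n"
  assumes "r \<le> CARD('k)"
  shows "err_E U V Ar r = 0 \<longleftrightarrow> (\<exists>S. card S = r \<and> U ** sel_mat S ** transpose V = Ar)"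
proof -
  define F where "F S = (frob_norm (U ** sel_mat S ** transpose V - Ar))^2" for S :: "'k set"
  have eq: "{(frob_norm (U ** sel_mat S ** transpose V - Ar))^2 | S. card S = r} = F ` {S. card S = r}"
    unfolding F_def by auto
  have fin: "finite (F ` {S. card S = r})" by simp
  obtain S0 :: "'k set" where "card S0 = r"
    using obtain_subset_with_card_n[of r "UNIV :: 'k set"] assms by auto
  hence ne: "F ` {S. card S = r} \<noteq> {}" by auto
  have E: "err_E U V Ar r = Min (F ` {S. card S = r})" unfolding err_E_def eq ..
  have F0: "F S = 0 \<longleftrightarrow> U ** sel_mat S ** transpose V = Ar" for S
    unfolding F_def using frob0[of "U ** sel_mat S ** transpose V - Ar"]
    by (auto simp: frob_norm_def)
  show ?thesis
  proof
    assume "err_E U V Ar r = 0"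
    hence "0 \<in> F ` {S. card S = r}" using Min_in[OF fin ne] E by simp
    thus "\<exists>S. card S = r \<and> U ** sel_mat S ** transpose V = Ar" using F0 by auto
  next
    assume "\<exists>S. card S = r \<and> U ** sel_mat S ** transpose V = Ar"
    then obtain S where "card S = r" "F S = 0" using F0 by auto
    hence "Min (F ` {S. card S = r}) \<le> 0" using Min_le[OF fin] by force
    moreover have "Min (F ` {S. card S = r}) \<ge> 0"
      using fin ne by (simp add: Min_ge_iff F_def)
    ultimately show "err_E U V Ar r = 0" using E by simp
  qed
qed

lemma inv_props: "invertible (G::real^'k^'k) \<Longrightarrow> G ** matrix_inv G = mat 1 \<and> matrix_inv G ** G = mat 1"
  unfolding invertible_def matrix_inv_def by (rule someI_ex)

lemma det_meas: "(det :: real^'k^'k \<Rightarrow> real) \<in> borel_measurable borel"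
  unfolding det_def
  by (intro borel_measurable_sum borel_measurable_prod borel_measurable_times borel_measurable_const
        borel_measurable_continuous_onI continuous_intros)

lemma inv_sets: "{G::real^'k^'k. invertible G} \<in> sets lborel"
proof -
  have "{G::real^'k^'k. invertible G} = det -` (-{0}) \<inter> space borel" by (auto simp add: invertible_det_nz)
  moreover have "det -` (-{0}) \<inter> space borel \<in> sets (borel :: (real^'k^'k) measure)"
    by (rule measurable_sets[OF det_meas]) simp
  ultimately show ?thesis by simp
qed

lemma closed_sets: fixes X Y :: "real^'k^'k"
  shows "{G::real^'k^'k. G ** X = Y ** G} \<in> sets lborel"
proof -
  have "closed {G::real^'k^'k. G ** X = Y ** G}"
    unfolding matrix_matrix_mult_def
    by (intro closed_Collect_eq continuous_intros)
  thus ?thesis by simp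
qed

lemma hyp_null: "{G::real^'k^'k. G $ i $ j = 0} \<in> null_sets lborel"
proof -
  have e: "{G::real^'k^'k. G $ i $ j = 0} = {G. axis i (axis j 1) \<bullet> G = 0}"
    by (simp add: inner_axis')
  have "negligible {G::real^'k^'k. axis i (axis j 1) \<bullet> G = 0}"
    by (rule negligible_hyperplane) (simp add: axis_eq_0_iff)
  hence "{G::real^'k^'k. axis i (axis j 1) \<bullet> G = 0} \<in> null_sets lebesgue" using negligible_iff_null_sets by blast
  hence "{G::real^'k^'k. G $ i $ j = 0} \<in> null_sets lebesgue" using e by simp
  moreover have "closed {G::real^'k^'k. G $ i $ j = 0}"
    by (intro closed_Collect_eq continuous_intros)
  ultimately show ?thesis using null_sets_completion_iff by (metis sets_lborel borel_closed)
qed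

lemma cancel_PQ:
  assumes "has_orthonormal_columns (P::real^'k^'m)" "has_orthonormal_columns (Q::real^'k^'n)"
  shows "transpose P ** (P ** Y ** transpose Q) ** Q = Y"
proof -
  have "transpose P ** (P ** Y ** transpose Q) ** Q = (transpose P ** P) ** Y ** (transpose Q ** Q)"
    by (simp add: matrix_mul_assoc)
  thus ?thesis using assms by (simp add: has_orthonormal_columns_def matrix_mul_lid matrix_mul_rid)
qed

lemma key:
  fixes P :: "real^'k^'m" and Q :: "real^'k^'n" and G :: "real^'k^'k"
  assumes P: "has_orthonormal_columns P" and Q: "has_orthonormal_columns Q"
    and pos: "\<forall>i. \<sigma> i > 0" and G: "invertible G"
  shows "(P ** diag_mat \<sigma> ** G) ** sel_mat S ** transpose (Q ** transpose (matrix_inv G))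
           = P ** (diag_mat \<sigma> ** sel_mat T) ** transpose Q
         \<longleftrightarrow> G ** sel_mat S = sel_mat T ** G"
proof -
  define Gi where "Gi = matrix_inv G"
  have GGi: "G ** Gi = mat 1" and GiG: "Gi ** G = mat 1" using inv_props[OF G] Gi_def by auto
  define W where "W = G ** sel_mat S ** Gi"
  have lhs: "(P ** diag_mat \<sigma> ** G) ** sel_mat S ** transpose (Q ** transpose Gi)
      = P ** (diag_mat \<sigma> ** W) ** transpose Q"
    unfolding W_def by (simp add: matrix_transpose_mul matrix_mul_assoc)
  have "W = sel_mat T \<longleftrightarrow> G ** sel_mat S = sel_mat T ** G"
  proof
    assume "W = sel_mat T"
    hence "sel_mat T ** G = G ** sel_mat S ** (Gi ** G)" unfolding W_def by (simp add: matrix_mul_assoc)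
    thus "G ** sel_mat S = sel_mat T ** G" using GiG by (simp add: matrix_mul_rid)
  next
    assume "G ** sel_mat S = sel_mat T ** G"
    hence "W = sel_mat T ** (G ** Gi)" unfolding W_def by (simp add: matrix_mul_assoc)
    thus "W = sel_mat T" using GGi by (simp add: matrix_mul_rid)
  qed
  moreover have "P ** (diag_mat \<sigma> ** W) ** transpose Q = P ** (diag_mat \<sigma> ** sel_mat T) ** transpose Q
      \<longleftrightarrow> W = sel_mat T"
  proof
    assume "P ** (diag_mat \<sigma> ** W) ** transpose Q = P ** (diag_mat \<sigma> ** sel_mat T) ** transpose Q"
    hence "diag_mat \<sigma> ** W = diag_mat \<sigma> ** sel_mat T" using cancel_PQ[OF P Q] by metis
    hence "diag_mat (\<lambda>i. inverse (\<sigma> i)) ** (diag_mat \<sigma> ** W) = diag_mat (\<lambda>i. inverse (\<sigma> i)) ** (diag_mat \<sigma> ** sel_mat T)"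
      by simp
    moreover have "diag_mat (\<lambda>i. inverse (\<sigma> i)) ** diag_mat \<sigma> = (mat 1 :: real^'k^'k)"
      using pos by (intro diag_inv) (auto simp: less_le)
    ultimately show "W = sel_mat T" by (simp add: matrix_mul_assoc matrix_mul_lid)
  qed simp
  ultimately show ?thesis using lhs Gi_def by simp
qed

lemma chart_min:
  fixes P :: "real^'k^'m" and Q :: "real^'k^'n" and G :: "real^'k^'k"
  assumes G: "invertible G"
  shows "(P ** diag_mat \<sigma> ** G) ** transpose (Q ** transpose (matrix_inv G)) = P ** diag_mat \<sigma> ** transpose Q"
proof -
  have "(P ** diag_mat \<sigma> ** G) ** transpose (Q ** transpose (matrix_inv G))
     = P ** diag_mat \<sigma> ** (G ** matrix_inv G) ** transpose Q"
    by (simp add: matrix_transpose_mul matrix_mul_assoc)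
  thus ?thesis using inv_props[OF G] by (simp add: matrix_mul_rid)
qed

theorem theorem4p1:
  fixes Mstar :: "real^'n^'m"
    and P :: "real^'k^'m" and Q :: "real^'k^'n"
    and \<sigma> :: "'k \<Rightarrow> real" and r :: nat
  assumes "CARD('k) = min CARD('m) CARD('n)"
    and "has_orthonormal_columns P" and "has_orthonormal_columns Q"
    and "\<forall>i. \<sigma> i > 0" and "inj \<sigma>"
    and "Mstar = P ** diag_mat \<sigma> ** transpose Q"
    and "1 \<le> r" and "r < CARD('k)"
  shows "rel_null P \<sigma> Q
           {(U, V) \<in> minimizers Mstar. err_E U V (trunc_svd P \<sigma> Q r) r = 0}"
proof -
  note P = assms(2) and Q = assms(3) and pos = assms(4)
  define T where "T = top_indices \<sigma> r"
  define X :: "((real^'k^'m) \<times> (real^'k^'n)) set" where "X = {(U, V) \<in> minimizers Mstar. err_E U V (trunc_svd P \<sigma> Q r) r = 0}"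
  define fam where "fam = {S::'k set. card S = r}"
  define B where "B = {G::real^'k^'k. invertible G} \<inter> (\<Union>S\<in>fam. {G. G ** sel_mat S = sel_mat T ** G})"
  have rle: "r \<le> CARD('k)" using assms(8) by simp
  have AB: "{G. invertible G \<and> chart P \<sigma> Q G \<in> X} = B"
  proof (intro set_eqI iffI)
    fix G assume "G \<in> {G. invertible G \<and> chart P \<sigma> Q G \<in> X}"
    hence G: "invertible G" and "chart P \<sigma> Q G \<in> X" by auto
    hence "err_E (P ** diag_mat \<sigma> ** G) (Q ** transpose (matrix_inv G)) (trunc_svd P \<sigma> Q r) r = 0"
      unfolding X_def chart_def by simp
    then obtain S where "card S = r"
      "(P ** diag_mat \<sigma> ** G) ** sel_mat S ** transpose (Q ** transpose (matrix_inv G)) = trunc_svd P \<sigma> Q r"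
      using err_zero[OF rle] by blast
    hence "S \<in> fam" "G ** sel_mat S = sel_mat T ** G"
      using key[OF P Q pos G] unfolding fam_def T_def trunc_eq by auto
    thus "G \<in> B" using G unfolding B_def by auto
  next
    fix G assume "G \<in> B"
    then obtain S where G: "invertible G" and S: "card S = r" "G ** sel_mat S = sel_mat T ** G"
      unfolding B_def fam_def by auto
    hence "(P ** diag_mat \<sigma> ** G) ** sel_mat S ** transpose (Q ** transpose (matrix_inv G)) = trunc_svd P \<sigma> Q r"
      using key[OF P Q pos G] unfolding T_def trunc_eq by auto
    hence "err_E (P ** diag_mat \<sigma> ** G) (Q ** transpose (matrix_inv G)) (trunc_svd P \<sigma> Q r) r = 0"
      using err_zero[OF rle] S by blast
    moreover have "(P ** diag_mat \<sigma> ** G, Q ** transpose (matrix_inv G)) \<in> minimizers Mstar"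
      unfolding minimizers_def using chart_min[OF G] assms(6) by simp
    ultimately show "G \<in> {G. invertible G \<and> chart P \<sigma> Q G \<in> X}"
      using G unfolding X_def chart_def by simp
  qed
  have finfam: "finite fam" by simp
  have Bs: "B \<in> sets lborel"
    unfolding B_def using inv_sets closed_sets finfam by (intro sets.Int sets.finite_UN) auto
  define N where "N = (\<Union>i. \<Union>j. {G::real^'k^'k. G $ i $ j = 0})"
  have Nn: "N \<in> null_sets lborel"
    unfolding N_def by (intro null_sets_UN' hyp_null) auto
  have BN: "B \<subseteq> N"
  proof
    fix G assume "G \<in> B"
    then obtain S where S: "card S = r" "G ** sel_mat S = sel_mat T ** G"
      unfolding B_def fam_def by auto
    have ent: "G $ a $ b * (if b \<in> S then 1 else 0) = (if a \<in> T then 1 else 0) * G $ a $ b" for a b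
    proof -
      have "(G ** sel_mat S) $ a $ b = (sel_mat T ** G) $ a $ b" using S by simp
      thus ?thesis unfolding sel_mat_def diag_left diag_right .
    qed
    have "S \<noteq> {}" using S assms(7) by auto
    then obtain b where b: "b \<in> S" by auto
    have "S \<noteq> UNIV" using S assms(8) by auto
    then obtain b' where b': "b' \<notin> S" by auto
    show "G \<in> N"
    proof (cases "\<exists>a. a \<notin> T")
      case True
      then obtain a where "a \<notin> T" by auto
      hence "G $ a $ b = 0" using ent[of a b] b by simp
      thus ?thesis unfolding N_def by auto
    next
      case False
      then obtain a where "a \<in> T" by auto
      hence "G $ a $ b' = 0" using ent[of a b'] b' by simp
      thus ?thesis unfolding N_def by auto
    qed
  qed
  have "B \<in> null_sets lborel" using null_sets_subset[OF Nn Bs BN] .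
  thus ?thesis unfolding rel_null_def AB[unfolded X_def] .
qed

end
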